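(* Let $m,n\ge0$, let $x=(x_1,\dots,x_m)$, $y=(y_1,\dots,y_n)$, and let $H_k(x,y)$ be as in the context. Then: (1) $H_k(x,y)=\sum_{j=0}^n(-1)^je_j(y)H_k'(x)$ with $H'_k(x):=H_{k-j}(x)$, i.e. $H_k(x,y)=\sum_{j=0}^n(-1)^je_j(y)H_{k-j}(x)$ for all $k\in\mathbb Z$, where $H_{k}(x)$ is the element for $n=0$ and $e_j(y)$ is the $j$-th elementary symmetric polynomial in $y$; (2) for all $k\in\mathbb Z$, $H_k(x,y)\Delta_m(x)\Delta_n(y)=\sum_{(\sigma,\tau)\in S_m\times S_n}\mathrm{sgn}(\sigma)\mathrm{sgn}(\tau)(\sigma,\tau)\Big(\prod_{j=1}^n\big(1-\tfrac{y_j}{x_1}\big)x_1^{k}x_1^{m-1}x_2^{m-2}\cdots x_m^0\,y_1^{n-1}\cdots y_n^0\Big)$, where $S_m$ permutes the $x$'s and $S_n$ the $y$'s; (3) for $m\ge1$ and all $k\in\mathbb Z$, $H_k(x,y)-x_1H_{k-1}(x,y)=H_k(x_2,\dots,x_m,y)$; (4) if $m=1$, then $H_k(x_1,y)-x_1H_{k-1}(x_1,y)=0$ for all $k\in\mathbb Z$; (5) for every sequence of integers $\lambda_1,\dots,\lambda_m$, $\det\big(H_{\lambda_i-i+j}(x,y)\big)_{1\le i,j\le m}=\prod_{i=1}^m\prod_{j=1}^n\big(1-\tfrac{y_j}{x_i}\big)E_\lambda(x_1,\dots,x_m)$; (6) for every sequence of integers $\lambda_1,\dots,\lambda_{m+1}$,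 $\det\big(H_{\lambda_i-i+j}(x,y)\big)_{1\le i,j\le m+1}=0$.
   Context: Define $h_k=h_k(x,y)$ and $h_k^{(\infty)}$ by the expansions at $t=0$ and at $t=\infty$: $\frac{\prod_{j=1}^n(1-y_jt)}{\prod_{i=1}^m(1-x_it)}=\sum_{k\ge0}h_kt^k=\sum_{k\le n-m}h^{(\infty)}_kt^k$, with $h_k=0$ for $k<0$ and $h^{(\infty)}_k=0$ for $k>n-m$. Set $H_k(x,y)=h_k-h_k^{(\infty)}$ for $k\in\mathbb Z$. $\Delta_m(x)=\prod_{i<j}(x_i-x_j)$, $\Delta_n(y)=\prod_{i<j}(y_i-y_j)$. For integers $\lambda_1,\dots,\lambda_m$, $E_\lambda(x)$ is defined by $E_\lambda(x)\Delta_m(x)=\sum_{\sigma\in S_m}\mathrm{sgn}(\sigma)\sigma(x_1^{\lambda_1+m-1}\cdots x_m^{\lambda_m})$. *)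

theory Defs
  imports "Jordan_Normal_Form.Determinant" "HOL-Computational_Algebra.Formal_Power_Series"
begin

text \<open>Points: x = [x_1,...,x_m], y = [y_1,...,y_n] are lists of field elements (0-based).
  Expansion at t = 0: coefficients of the formal power series prod(1 - y_j t)/prod(1 - x_i t).
  Expansion at t = infinity: with s = 1/t the function equals s^(m-n) * G(s), where
  G(s) = prod(s - y_j)/prod(s - x_i) is expanded as a power series in s (requires x_i nonzero);
  hence the coefficient of t^k is the coefficient of s^(n-m-k) of G.\<close>

definition h0 :: "'a::field list \<Rightarrow> 'a list \<Rightarrow> int \<Rightarrow> 'a" where
  "h0 x y k = (if k < 0 then 0 else
     fps_nth (prod_list (map (\<lambda>b. 1 - fps_const b * fps_X) y)
              * inverse (prod_list (map (\<lambda>a. 1 - fps_const a * fps_X) x))) (nat k))"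

definition hinf :: "'a::field list \<Rightarrow> 'a list \<Rightarrow> int \<Rightarrow> 'a" where
  "hinf x y k = (if k > int (length y) - int (length x) then 0 else
     fps_nth (prod_list (map (\<lambda>b. fps_X - fps_const b) y)
              * inverse (prod_list (map (\<lambda>a. fps_X - fps_const a) x)))
             (nat (int (length y) - int (length x) - k)))"

definition HH :: "'a::field list \<Rightarrow> 'a list \<Rightarrow> int \<Rightarrow> 'a" where
  "HH x y k = h0 x y k - hinf x y k"

definition esym :: "nat \<Rightarrow> 'a::field list \<Rightarrow> 'a" where
  "esym j y = (\<Sum>S\<in>{S. S \<subseteq> {..<length y} \<and> card S = j}. \<Prod>i\<in>S. y ! i)"

definition vdm :: "'a::field list \<Rightarrow> 'a" where
  "vdm x = (\<Prod>i<length x. \<Prod>j\<in>{i<..<length x}. x ! i - x ! j)"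

text \<open>Alternant sum_sigma sgn(sigma) sigma(x_1^(lam_1+m-1) ... x_m^(lam_m)) and
  E_lam = alternant / Delta (meaningful for distinct x).\<close>
definition alt :: "int list \<Rightarrow> 'a::field list \<Rightarrow> 'a" where
  "alt lam x = (\<Sum>\<sigma> | \<sigma> permutes {..<length x}. of_int (sign \<sigma>) *
      (\<Prod>i<length x. (x ! (\<sigma> i)) powi (lam ! i + int (length x) - 1 - int i)))"

definition Elam :: "int list \<Rightarrow> 'a::field list \<Rightarrow> 'a" where
  "Elam lam x = alt lam x / vdm x"

end

theory Submission
  imports Defs
begin


notation fps_nth (infixl "$$$" 75)

abbreviation Py :: "'a::field list \<Rightarrow> 'a fps" where
  "Py y \<equiv> prod_list (map (\<lambda>b. 1 - fps_const b * fps_X) y)"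
abbreviation Ry :: "'a::field list \<Rightarrow> 'a fps" where
  "Ry y \<equiv> prod_list (map (\<lambda>b. fps_X - fps_const b) y)"

lemma coeff_shift1: "((1 - fps_const (a::'a::field) * fps_X) * F) $$$ n = F $$$ n - (if n = 0 then 0 else a * F $$$ (n - 1))"
proof -
  have "(1 - fps_const a * fps_X) * F = F - fps_const a * (fps_X * F)" by (simp add: algebra_simps)
  then show ?thesis by (simp add: fps_X_mult_nth)
qed

lemma coeff_shift2: "((fps_X - fps_const (a::'a::field)) * F) $$$ n = (if n = 0 then 0 else F $$$ (n - 1)) - a * F $$$ n"
proof -
  have "(fps_X - fps_const a) * F = fps_X * F - fps_const a * F" by (simp add: algebra_simps)
  then show ?thesis by (simp add: fps_X_mult_nth)
qed

lemma key1: "(1 - fps_const (a::'a::field) * fps_X) * (Py y * inverse (Py (a#x))) = Py y * inverse (Py x)"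
proof -
  let ?u = "1 - fps_const a * fps_X"
  have 1: "?u * inverse ?u = 1"
    by (rule inverse_mult_eq_1') simp
  have "Py (a#x) = ?u * Py x" by simp
  hence "inverse (Py (a#x)) = inverse ?u * inverse (Py x)" by (simp only: fps_inverse_mult)
  hence "?u * (Py y * inverse (Py (a#x))) = (?u * inverse ?u) * (Py y * inverse (Py x))"
    by (simp only: ac_simps)
  then show ?thesis using 1 by simp
qed

lemma key2: assumes "(a::'a::field) \<noteq> 0"
  shows "(fps_X - fps_const a) * (Ry y * inverse (Ry (a#x))) = Ry y * inverse (Ry x)"
proof -
  let ?u = "fps_X - fps_const a"
  have 1: "?u * inverse ?u = 1"
    by (rule inverse_mult_eq_1') (simp add: assms)
  have "Ry (a#x) = ?u * Ry x" by simp
  hence "inverse (Ry (a#x)) = inverse ?u * inverse (Ry x)" by (simp only: fps_inverse_mult)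
  hence "?u * (Ry y * inverse (Ry (a#x))) = (?u * inverse ?u) * (Ry y * inverse (Ry x))"
    by (simp only: ac_simps)
  then show ?thesis using 1 by simp
qed

lemma h0_rec: "h0 (a#x) y k - a * h0 (a#x) y (k-1) = h0 x y k"
proof -
  let ?F = "Py y * inverse (Py (a#x))"
  have e: "(Py y * inverse (Py x)) $$$ n = ?F $$$ n - (if n = 0 then 0 else a * ?F $$$ (n - 1))" for n
    using coeff_shift1[of a ?F n] by (simp only: key1)
  show ?thesis
  proof (cases "k < 0")
    case True then show ?thesis by (simp add: h0_def)
  next
    case False
    then show ?thesis
    proof (cases "k = 0")
      case True then show ?thesis using e[of 0] by (simp add: h0_def)
    next
      case False
      with \<open>\<not> k < 0\<close> have "nat (k - 1) = nat k - 1" "nat k \<noteq> 0" by auto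
      then show ?thesis using e[of "nat k"] \<open>\<not> k < 0\<close> False by (simp add: h0_def)
    qed
  qed
qed

lemma hinf_rec: assumes "(a::'a::field) \<noteq> 0"
  shows "hinf (a#x) y k - a * hinf (a#x) y (k-1) = hinf x y k"
proof -
  let ?G = "Ry y * inverse (Ry (a#x))"
  have e: "(Ry y * inverse (Ry x)) $$$ n = (if n = 0 then 0 else ?G $$$ (n - 1)) - a * ?G $$$ n" for n
    using coeff_shift2[of a ?G n] by (simp only: key2[OF assms])
  define N where "N = int (length y) - int (length x)"
  have L: "int (length y) - int (length (a#x)) = N - 1" by (simp add: N_def)
  show ?thesis
  proof (cases "k > N")
    case True then show ?thesis unfolding hinf_def L N_def[symmetric] by simp
  next
    case False
    then show ?thesis
    proof (cases "k = N")
      case True then show ?thesis using e[of 0] unfolding hinf_def L N_def[symmetric] by simp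
    next
      case False
      with \<open>\<not> k > N\<close> have "nat (N - k) \<noteq> 0" "nat (N - 1 - (k - 1)) = nat (N - k)"
          "nat (N - 1 - k) = nat (N - k) - 1" by auto
      then show ?thesis using e[of "nat (N - k)"] \<open>\<not> k > N\<close> False
        unfolding hinf_def L N_def[symmetric] by simp
    qed
  qed
qed

lemma HH_rec: assumes "(a::'a::field) \<noteq> 0"
  shows "HH (a#x) y k - a * HH (a#x) y (k-1) = HH x y k"
  using h0_rec[of a x y k] hinf_rec[OF assms, of x y k] unfolding HH_def by (simp add: algebra_simps)



definition es :: "nat \<Rightarrow> nat \<Rightarrow> (nat \<Rightarrow> 'b::comm_ring_1) \<Rightarrow> 'b" where
  "es j n g = (\<Sum>S\<in>{S. S \<subseteq> {..<n} \<and> card S = j}. \<Prod>i\<in>S. g i)"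

lemma prod_expand:
  fixes u v :: "'b::comm_ring_1"
  shows "(\<Prod>i<n. u - v * g i) = (\<Sum>j\<le>n. (-1)^j * es j n g * v^j * u^(n-j))"
proof -
  let ?A = "{..<n}"
  have "(\<Prod>i<n. u - v * g i) = (\<Prod>i\<in>?A. (- v * g i) + u)" by simp
  also have "\<dots> = (\<Sum>X\<in>Pow ?A. (\<Prod>i\<in>X. - v * g i) * (\<Prod>i\<in>?A - X. u))"
    by (rule prod_add) simp
  also have "\<dots> = (\<Sum>X\<in>Pow ?A. (-1)^card X * v^card X * u^(n - card X) * (\<Prod>i\<in>X. g i))"
  proof (rule sum.cong[OF refl])
    fix X assume X: "X \<in> Pow ?A"
    then have f: "finite X" by (auto intro: finite_subset)
    have c: "card (?A - X) = n - card X" using X by (simp add: card_Diff_subset f)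
    have "(\<Prod>i\<in>X. - v * g i) = (-1)^card X * v^card X * (\<Prod>i\<in>X. g i)"
      by (subst prod.distrib) (simp add: power_minus[of v])
    then show "(\<Prod>i\<in>X. - v * g i) * (\<Prod>i\<in>?A - X. u) = (-1)^card X * v^card X * u^(n - card X) * (\<Prod>i\<in>X. g i)"
      using c by (simp add: ac_simps)
  qed
  also have "\<dots> = (\<Sum>j\<le>n. \<Sum>X\<in>{X. X \<in> Pow ?A \<and> card X = j}. (-1)^card X * v^card X * u^(n - card X) * (\<Prod>i\<in>X. g i))"
    by (rule sum.group[symmetric]) (auto intro: card_mono[of ?A, simplified])
  also have "\<dots> = (\<Sum>j\<le>n. (-1)^j * es j n g * v^j * u^(n-j))"
  proof (rule sum.cong[OF refl])
    fix j
    have "(\<Sum>X\<in>{X. X \<in> Pow ?A \<and> card X = j}. (-1)^card X * v^card X * u^(n - card X) * (\<Prod>i\<in>X. g i))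
        = (\<Sum>X\<in>{S. S \<subseteq> ?A \<and> card S = j}. ((-1)^j * v^j * u^(n - j)) * (\<Prod>i\<in>X. g i))"
      by (rule sum.cong) auto
    also have "\<dots> = (-1)^j * es j n g * v^j * u^(n-j)"
      by (simp add: es_def sum_distrib_left ac_simps)
    finally show "(\<Sum>X\<in>{X. X \<in> Pow ?A \<and> card X = j}. (-1)^card X * v^card X * u^(n - card X) * (\<Prod>i\<in>X. g i))
        = (-1)^j * es j n g * v^j * u^(n-j)" .
  qed
  finally show ?thesis .
qed

lemma esym_es: "esym j y = es j (length y) (\<lambda>i. y!i)" by (simp add: esym_def es_def)

lemma fps_const_sum': "fps_const (sum f A) = (\<Sum>a\<in>A. fps_const (f a))"
  by (induct A rule: infinite_finite_induct) (simp_all add: fps_const_add[symmetric] del: fps_const_add)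

lemma fps_const_prod': "fps_const (prod f A) = (\<Prod>a\<in>A. fps_const (f a))"
  by (induct A rule: infinite_finite_induct) (simp_all add: fps_const_mult[symmetric] del: fps_const_mult)

lemma fps_const_es: "fps_const (es j n g) = es j n (\<lambda>i. fps_const (g i))"
  by (simp add: es_def fps_const_sum' fps_const_prod')

lemma prod_list_nth: "prod_list (map f y) = (\<Prod>i<length y. f (y!i))"
  by (induct y) (simp_all add: prod.lessThan_Suc_shift del: prod.lessThan_Suc)

lemma fc_sign: "fps_const ((-1)^j * e) = (-1)^j * fps_const (e::'a::field)"
  by (induct j) (simp_all add: fps_const_neg[symmetric] del: fps_const_neg)

lemma Py_exp: "Py (y::'a::field list) = (\<Sum>j\<le>length y. fps_const ((-1)^j * esym j y) * fps_X^j)"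
proof -
  have "Py y = (\<Prod>i<length y. 1 - fps_X * fps_const (y!i))" by (simp add: prod_list_nth ac_simps)
  also have "\<dots> = (\<Sum>j\<le>length y. (-1)^j * es j (length y) (\<lambda>i. fps_const (y!i)) * fps_X^j * 1^(length y - j))"
    by (rule prod_expand)
  also have "\<dots> = (\<Sum>j\<le>length y. fps_const ((-1)^j * esym j y) * fps_X^j)"
    by (simp add: esym_es fps_const_es[symmetric] fc_sign)
  finally show ?thesis .
qed

lemma Ry_exp: "Ry (y::'a::field list) = (\<Sum>j\<le>length y. fps_const ((-1)^j * esym j y) * fps_X^(length y - j))"
proof -
  have "Ry y = (\<Prod>i<length y. fps_X - 1 * fps_const (y!i))" by (simp add: prod_list_nth)
  also have "\<dots> = (\<Sum>j\<le>length y. (-1)^j * es j (length y) (\<lambda>i. fps_const (y!i)) * 1^j * fps_X^(length y - j))"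
    by (rule prod_expand)
  also have "\<dots> = (\<Sum>j\<le>length y. fps_const ((-1)^j * esym j y) * fps_X^(length y - j))"
    by (simp add: esym_es fps_const_es[symmetric] fc_sign)
  finally show ?thesis .
qed

lemma h0_exp: "h0 x y k = (\<Sum>j\<le>length y. (-1)^j * esym j y * h0 x [] (k - int j))"
proof (cases "k < 0")
  case True then show ?thesis by (simp add: h0_def)
next
  case False
  let ?I = "inverse (Py x)"
  have "h0 x y k = (Py y * ?I) $$$ nat k" using False by (simp add: h0_def)
  also have "\<dots> = (\<Sum>j\<le>length y. (fps_const ((-1)^j * esym j y) * (fps_X^j * ?I)) $$$ nat k)"
    by (simp add: Py_exp sum_distrib_right fps_sum_nth mult.assoc)
  also have "\<dots> = (\<Sum>j\<le>length y. (-1)^j * esym j y * h0 x [] (k - int j))"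
    by (rule sum.cong[OF refl]) (use False in \<open>auto simp: fps_X_power_mult_nth h0_def nat_diff_distrib\<close>)
  finally show ?thesis .
qed

lemma hinf_exp: "hinf x y k = (\<Sum>j\<le>length y. (-1)^j * esym j y * hinf x [] (k - int j))"
proof -
  let ?I = "inverse (Ry x)"
  let ?n = "length y" and ?m = "length x"
  show ?thesis
  proof (cases "k > int ?n - int ?m")
    case True
    have "hinf x [] (k - int j) = 0" if "j \<le> ?n" for j
      using True that by (simp add: hinf_def)
    then show ?thesis using True by (simp add: hinf_def)
  next
    case False
    define N where "N = nat (int ?n - int ?m - k)"
    have "hinf x y k = (Ry y * ?I) $$$ N" using False by (simp add: hinf_def N_def)
    also have "\<dots> = (\<Sum>j\<le>?n. (fps_const ((-1)^j * esym j y) * (fps_X^(?n - j) * ?I)) $$$ N)"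
      by (simp add: Ry_exp sum_distrib_right fps_sum_nth mult.assoc)
    also have "\<dots> = (\<Sum>j\<le>length y. (-1)^j * esym j y * hinf x [] (k - int j))"
    proof (rule sum.cong[OF refl])
      fix j assume j: "j \<in> {..?n}"
      have 1: "(N < ?n - j) = (k - int j > - int ?m)" using j False by (auto simp: N_def)
      have 2: "N - (?n - j) = nat (0 - int ?m - (k - int j))" using j False by (auto simp: N_def)
      show "(fps_const ((-1)^j * esym j y) * (fps_X^(?n - j) * ?I)) $$$ N = (-1)^j * esym j y * hinf x [] (k - int j)"
        unfolding fps_mult_left_const_nth fps_X_power_mult_nth 1 2 by (simp add: hinf_def)
    qed
    finally show ?thesis .
  qed
qed

lemma HH_exp: "HH x y k = (\<Sum>j\<le>length y. (-1)^j * esym j y * HH x [] (k - int j))"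
proof -
  have "HH x y k = (\<Sum>j\<le>length y. (-1)^j * esym j y * h0 x [] (k - int j)) - (\<Sum>j\<le>length y. (-1)^j * esym j y * hinf x [] (k - int j))"
    unfolding HH_def using h0_exp[of x y k] hinf_exp[of x y k] by simp
  also have "\<dots> = (\<Sum>j\<le>length y. (-1)^j * esym j y * h0 x [] (k - int j) - (-1)^j * esym j y * hinf x [] (k - int j))"
    by (simp only: sum_subtractf)
  also have "\<dots> = (\<Sum>j\<le>length y. (-1)^j * esym j y * HH x [] (k - int j))"
    by (simp only: HH_def right_diff_distrib)
  finally show ?thesis .
qed

lemma HH_nil_nil: "HH [] [] k = (0::'a::field)"
proof -
  have "h0 [] [] k = (if k = 0 then (1::'a) else 0)"
    by (cases "k < 0") (auto simp: h0_def)
  moreover have "hinf [] [] k = (if k = 0 then (1::'a) else 0)"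
    by (cases "k > 0") (auto simp: hinf_def)
  ultimately show ?thesis by (simp add: HH_def)
qed

lemma HH_nil: "HH [] y k = (0::'a::field)"
  by (subst HH_exp) (simp add: HH_nil_nil)



definition RS :: "int \<Rightarrow> 'a::field set \<Rightarrow> 'a" where
  "RS k S = (\<Sum>u\<in>S. u powi (k + int (card S) - 1) / (\<Prod>v\<in>S - {u}. u - v))"

lemma RS_rec:
  fixes S :: "'a::field set"
  assumes fin: "finite S" and aS: "a \<in> S" and nz: "0 \<notin> S"
  shows "RS k S - a * RS (k-1) S = RS k (S - {a})"
proof -
  define c where "c = int (card S)"
  have "card S > 0" using aS fin card_gt_0_iff by blast
  then have cS: "int (card (S - {a})) = c - 1" using aS fin by (simp add: c_def of_nat_diff)
  let ?P = "\<lambda>T u. (\<Prod>v\<in>T - {u}. u - v)"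
  have "RS k S - a * RS (k-1) S = (\<Sum>u\<in>S. (u powi (k + c - 1) - a * u powi (k - 1 + c - 1)) / ?P S u)"
    unfolding RS_def c_def[symmetric] by (simp add: sum_subtractf sum_distrib_left diff_divide_distrib)
  also have "\<dots> = (\<Sum>u\<in>S. u powi (k + c - 2) * (u - a) / ?P S u)"
  proof (rule sum.cong[OF refl])
    fix u assume "u \<in> S"
    then have "u \<noteq> 0" using nz by auto
    then have "u powi (k + c - 1) = u powi (k + c - 2) * u"
      using power_int_minus_mult[of u "k + c - 1"] by (simp add: algebra_simps)
    then show "(u powi (k + c - 1) - a * u powi (k - 1 + c - 1)) / ?P S u = u powi (k + c - 2) * (u - a) / ?P S u"
      by (simp add: algebra_simps)
  qed
  also have "\<dots> = (\<Sum>u\<in>S - {a}. u powi (k + c - 2) * (u - a) / ?P S u)"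
    using aS fin by (subst sum.remove[of S a]) auto
  also have "\<dots> = (\<Sum>u\<in>S - {a}. u powi (k + (c - 1) - 1) / ?P (S - {a}) u)"
  proof (rule sum.cong[OF refl])
    fix u assume u: "u \<in> S - {a}"
    have eq: "S - {u} = insert a (S - {a} - {u})" using u aS by auto
    have "?P S u = (\<Prod>v\<in>insert a (S - {a} - {u}). u - v)" unfolding eq ..
    also have "\<dots> = (u - a) * ?P (S - {a}) u"
      by (rule prod.insert) (use fin in auto)
    finally have "?P S u = (u - a) * ?P (S - {a}) u" .
    moreover have "u - a \<noteq> 0" using u by auto
    ultimately show "u powi (k + c - 2) * (u - a) / ?P S u = u powi (k + (c - 1) - 1) / ?P (S - {a}) u"
      by (simp add: nonzero_mult_divide_mult_cancel_left mult.commute[of _ "u - a"] algebra_simps(1-11))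
  qed
  also have "\<dots> = RS k (S - {a})" unfolding RS_def cS ..
  finally show ?thesis .
qed

lemma geo:
  fixes f :: "int \<Rightarrow> 'a::field"
  assumes r: "\<And>k. f k = a * f (k-1)" and a: "a \<noteq> 0"
  shows "f k = a powi k * f 0"
proof -
  have p: "f (int n) = a ^ n * f 0" for n
    by (induct n) (use r[of "int (Suc _)"] in auto)
  have m: "f (- int n) = inverse a ^ n * f 0" for n
  proof (induct n)
    case (Suc n)
    have e: "- int n - 1 = - int (Suc n)" by simp
    have "f (- int n) = a * f (- int (Suc n))" using r[of "- int n"] unfolding e .
    then show ?case using Suc a by (simp add: field_simps)
  qed simp
  show ?thesis
  proof (cases "k \<ge> 0")
    case True then obtain n where "k = int n" by (metis nonneg_eq_int)
    then show ?thesis using p by simp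
  next
    case False then obtain n where "k = - int n" by (metis linear minus_minus neg_0_le_iff_le nonneg_eq_int)
    then show ?thesis using m by (simp add: power_int_minus power_inverse)
  qed
qed

lemma HH_swap: "HH (a#b#r) y k = HH (b#a#r) y k"
  by (simp add: HH_def h0_def hinf_def mult.left_commute)

lemma D_rec:
  fixes x :: "'a::field list"
  assumes d: "distinct (a#x)" and nz: "0 \<notin> set (a#x)" and IH: "\<And>k. HH x [] k = RS k (set x)"
  shows "HH (a#x) [] k - RS k (set (a#x)) = a * (HH (a#x) [] (k-1) - RS (k-1) (set (a#x)))"
proof -
  have 1: "HH (a#x) [] k - a * HH (a#x) [] (k-1) = HH x [] k" using HH_rec[of a x "[]" k] nz by auto
  have 2: "RS k (set (a#x)) - a * RS (k-1) (set (a#x)) = RS k (set (a#x) - {a})"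
    by (rule RS_rec) (use nz in auto)
  have 3: "set (a#x) - {a} = set x" using d by auto
  show ?thesis using 1 2 IH[of k] unfolding 3 by (simp add: algebra_simps)
qed

lemma HH_closed:
  fixes x :: "'a::field list"
  assumes "distinct x" "0 \<notin> set x"
  shows "HH x [] k = RS k (set x)"
  using assms
proof (induct "length x" arbitrary: x k rule: less_induct)
  case less
  show ?case
  proof (cases x)
    case Nil then show ?thesis by (simp add: HH_nil RS_def)
  next
    case (Cons a x')
    define D where "D = (\<lambda>k. HH x [] k - RS k (set x))"
    have a0: "a \<noteq> 0" using less.prems Cons by auto
    have IH': "HH x' [] k = RS k (set x')" for k
      using less.hyps[of x' k] less.prems Cons by auto
    have rA: "D k = a * D (k-1)" for k
      unfolding D_def Cons by (rule D_rec) (use less.prems Cons IH' in auto)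
    have Dk: "D k = a powi k * D 0" for k by (rule geo[where f=D and a=a, OF rA a0])
    have "D 0 = 0"
    proof (cases x')
      case Nil
      have "h0 [a] [] 0 = (1::'a)" by (simp add: h0_def)
      moreover have "hinf [a] [] 0 = (0::'a)" by (simp add: hinf_def)
      ultimately show ?thesis unfolding D_def Cons Nil by (simp add: HH_def RS_def)
    next
      fix b r assume Cons2: "x' = b # r"
      have b0: "b \<noteq> 0" and ab: "a \<noteq> b" using less.prems Cons Cons2 by auto
      have IH2: "HH (a#r) [] k = RS k (set (a#r))" for k
        using less.hyps[of "a#r" k] less.prems Cons Cons2 by auto
      have sw: "D k = HH (b#a#r) [] k - RS k (set (b#a#r))" for k
        unfolding D_def Cons Cons2 by (simp add: HH_swap insert_commute)
      have rB: "D k = b * D (k-1)" for k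
        unfolding sw by (rule D_rec) (use less.prems Cons Cons2 IH2 in auto)
      have "a * D 0 = b * D 0" using rA[of 1] rB[of 1] by (metis diff_self)
      then show ?thesis using ab by simp
    qed
    then show ?thesis using Dk[of k] by (simp add: D_def)
  qed
qed



definition Pf :: "'a::field list \<Rightarrow> 'a \<Rightarrow> 'a" where
  "Pf y u = (\<Prod>j<length y. 1 - y!j / u)"

definition cw :: "'a::field list \<Rightarrow> nat \<Rightarrow> 'a" where
  "cw x a = 1 / (\<Prod>b\<in>{..<length x} - {a}. x!a - x!b)"

lemma Pf_exp: "Pf y u = (\<Sum>j\<le>length y. (-1)^j * esym j y * inverse u ^ j)"
proof -
  have "Pf y u = (\<Prod>j<length y. 1 - inverse u * y!j)" by (simp add: Pf_def divide_inverse ac_simps)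
  also have "\<dots> = (\<Sum>j\<le>length y. (-1)^j * es j (length y) (\<lambda>i. y!i) * inverse u ^ j * 1^(length y - j))"
    by (rule prod_expand)
  finally show ?thesis by (simp add: esym_es)
qed

lemma closed_set:
  fixes x :: "'a::field list"
  assumes d: "distinct x" and nz: "0 \<notin> set x"
  shows "HH x y k = (\<Sum>u\<in>set x. Pf y u * u powi (k + int (length x) - 1) / (\<Prod>v\<in>set x - {u}. u - v))"
proof -
  have c: "card (set x) = length x" using d by (simp add: distinct_card)
  have "HH x y k = (\<Sum>j\<le>length y. (-1)^j * esym j y * RS (k - int j) (set x))"
    by (subst HH_exp) (simp add: HH_closed[OF d nz])
  also have "\<dots> = (\<Sum>j\<le>length y. \<Sum>u\<in>set x. (-1)^j * esym j y * (u powi (k - int j + int (length x) - 1) / (\<Prod>v\<in>set x - {u}. u - v)))"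
    by (simp add: RS_def c sum_distrib_left)
  also have "\<dots> = (\<Sum>u\<in>set x. \<Sum>j\<le>length y. (-1)^j * esym j y * (u powi (k - int j + int (length x) - 1) / (\<Prod>v\<in>set x - {u}. u - v)))"
    by (rule sum.swap)
  also have "\<dots> = (\<Sum>u\<in>set x. Pf y u * u powi (k + int (length x) - 1) / (\<Prod>v\<in>set x - {u}. u - v))"
  proof (rule sum.cong[OF refl])
    fix u assume "u \<in> set x"
    then have u0: "u \<noteq> 0" using nz by auto
    have e: "u powi (k - int j + int (length x) - 1) = u powi (k + int (length x) - 1) * inverse u ^ j" for j
    proof -
      have ex: "k - int j + int (length x) - 1 = (k + int (length x) - 1) + (- int j)" by simp
      have "u powi (k - int j + int (length x) - 1) = u powi (k + int (length x) - 1) * u powi (- int j)"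
        unfolding ex using u0 by (rule power_int_add[of u, OF disjI1])
      then show ?thesis by (simp add: power_int_minus power_inverse)
    qed
    show "(\<Sum>j\<le>length y. (-1)^j * esym j y * (u powi (k - int j + int (length x) - 1) / (\<Prod>v\<in>set x - {u}. u - v)))
        = Pf y u * u powi (k + int (length x) - 1) / (\<Prod>v\<in>set x - {u}. u - v)"
      unfolding e Pf_exp by (simp add: divide_inverse sum_distrib_left sum_distrib_right ac_simps)
  qed
  finally show ?thesis .
qed

lemma sum_set_nth: "distinct x \<Longrightarrow> (\<Sum>u\<in>set x. f u) = (\<Sum>a<length x. f (x!a))"
proof -
  assume d: "distinct x"
  have sx: "set x = (\<lambda>i. x!i) ` {..<length x}" by (auto simp: in_set_conv_nth)
  have inj: "inj_on (\<lambda>i. x!i) {..<length x}" using d by (simp add: inj_on_nth)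
  show ?thesis unfolding sx sum.reindex[OF inj] by simp
qed

lemma closed:
  fixes x :: "'a::field list"
  assumes d: "distinct x" and nz: "0 \<notin> set x"
  shows "HH x y k = (\<Sum>a<length x. Pf y (x!a) * (x!a) powi (k + int (length x) - 1) * cw x a)"
proof -
  have inj: "inj_on (\<lambda>i. x!i) {..<length x}" using d by (simp add: inj_on_nth)
  have pr: "(\<Prod>v\<in>set x - {x!a}. x!a - v) = (\<Prod>b\<in>{..<length x} - {a}. x!a - x!b)" if a: "a < length x" for a
  proof -
    have "set x - {x!a} = (\<lambda>i. x!i) ` ({..<length x} - {a})" using a d
      by (auto simp: in_set_conv_nth nth_eq_iff_index_eq)
    moreover have "inj_on (\<lambda>i. x!i) ({..<length x} - {a})" using inj by (rule inj_on_subset) auto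
    ultimately show ?thesis by (simp add: prod.reindex)
  qed
  show ?thesis
    unfolding closed_set[OF d nz] sum_set_nth[OF d]
    by (rule sum.cong) (auto simp: pr cw_def)
qed



lemma mat_mult_mat: "mat m k f * mat k n g = mat m n (\<lambda>(i,j). \<Sum>l<k. f(i,l) * g(l,j))"
  by (rule eq_matI) (auto simp: scalar_prod_def row_def col_def atLeast0LessThan intro!: sum.cong)

lemma det_leib: "det (mat n n f) = (\<Sum>p | p permutes {..<n}. of_int (sign p) * (\<Prod>i<n. f (i, p i)))"
proof -
  have "det (mat n n f) = (\<Sum>p | p permutes {..<n}. of_int (sign p) * (\<Prod>i<n. mat n n f $$ (i, p i)))"
    by (simp add: det_def'[OF mat_carrier] atLeast0LessThan)
  also have "\<dots> = (\<Sum>p | p permutes {..<n}. of_int (sign p) * (\<Prod>i<n. f (i, p i)))"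
  proof (rule sum.cong[OF refl])
    fix p assume p: "p \<in> {p. p permutes {..<n}}"
    have "mat n n f $$ (i, p i) = f (i, p i)" if "i < n" for i
    proof -
      have "p i < n" using permutes_in_image[of p "{..<n}" i] p that by simp
      then show ?thesis using that by simp
    qed
    then show "of_int (sign p) * (\<Prod>i<n. mat n n f $$ (i, p i)) = of_int (sign p) * (\<Prod>i<n. f (i, p i))"
      by simp
  qed
  finally show ?thesis .
qed

lemma det_rowscale: "det (mat n n (\<lambda>(i,j). r i * f(i,j))) = (\<Prod>i<n. r i) * det (mat n n f)"
  unfolding det_leib by (simp add: sum_distrib_left prod.distrib ac_simps)

lemma det_colscale: "det (mat n n (\<lambda>(i,j). f(i,j) * c j)) = (\<Prod>j<n. c j) * det (mat n n f)"
  unfolding det_leib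
proof (simp add: sum_distrib_left, rule sum.cong[OF refl])
  fix p assume "p \<in> {p. p permutes {..<n}}"
  then have b: "bij_betw p {..<n} {..<n}" by (auto intro: permutes_imp_bij)
  have "(\<Prod>i<n. c (p i)) = (\<Prod>i<n. c i)" using prod.reindex_bij_betw[OF b] .
  then show "of_int (sign p) * (\<Prod>i<n. f (i, p i) * c (p i)) = (\<Prod>j<n. c j) * (of_int (sign p) * (\<Prod>i<n. f (i, p i)))"
    by (simp add: prod.distrib ac_simps)
qed

definition Vm :: "'a::field list \<Rightarrow> 'a mat" where
  "Vm x = mat (length x) (length x) (\<lambda>(i,a). x!a ^ (length x - 1 - i))"

lemma prod_Suc_ivl: "(\<Prod>j\<in>{Suc i<..<Suc m}. g j) = (\<Prod>j\<in>{i<..<m}. g (Suc j))"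
  unfolding atLeastSucLessThan_greaterThanLessThan[symmetric] by (rule prod.shift_bounds_Suc_ivl)

lemma vdm_Cons: "vdm (a#x) = (\<Prod>j<length x. a - x!j) * vdm x"
proof -
  have "vdm (a#x) = (\<Prod>j\<in>{0<..<Suc (length x)}. a - (a#x)!j) *
      (\<Prod>i<length x. \<Prod>j\<in>{Suc i<..<Suc (length x)}. x!i - (a#x)!j)"
    unfolding vdm_def by (simp add: prod.lessThan_Suc_shift del: prod.lessThan_Suc)
  also have "\<dots> = (\<Prod>j<length x. a - x!j) * vdm x"
    unfolding prod_Suc_ivl atLeastSucLessThan_greaterThanLessThan[symmetric, of 0]
    unfolding prod.shift_bounds_Suc_ivl vdm_def by (simp add: atLeast0LessThan)
  finally show ?thesis .
qed

lemma prod_neg: "(\<Prod>j<n. (b::'a::comm_ring_1) - c j) = (-1)^n * (\<Prod>j<n. c j - b)"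
proof -
  have "(\<Prod>j<n. b - c j) = (\<Prod>j<n. (-1) * (c j - b))" by simp
  also have "\<dots> = (-1)^n * (\<Prod>j<n. c j - b)" by (simp only: prod.distrib) simp
  finally show ?thesis .
qed



lemma sum_E: "i < m \<Longrightarrow> (\<Sum>l<m. ((if l = i then 1 else 0) + (if l = Suc i then -a else 0)) * g l)
   = g i - (if Suc i < m then a * g (Suc i) else (0::'a::comm_ring_1))"
proof -
  assume i: "i < m"
  have "(\<Sum>l<m. ((if l = i then 1 else 0) + (if l = Suc i then -a else 0)) * g l)
     = (\<Sum>l<m. (if l = i then g l else 0) + (if l = Suc i then -a * g l else 0))" by (rule sum.cong) auto
  also have "\<dots> = g i + (if Suc i < m then -a * g (Suc i) else 0)"
    by (simp only: sum.distrib sum.delta) (use i in simp)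
  finally show ?thesis by simp
qed

lemma det_Vm: "det (Vm (x::'a::field list)) = vdm x"
proof (induct x)
  case Nil
  show ?case by (simp add: Vm_def vdm_def)
next
  case (Cons a x)
  define m' where "m' = length x"
  define m where "m = Suc m'"
  have lm: "length (a#x) = m" by (simp add: m_def m'_def)
  define V where "V = Vm (a#x)"
  have Vd: "V = mat m m (\<lambda>(i,c). (a#x)!c ^ (m' - i))" unfolding V_def Vm_def lm by (simp add: m_def)
  define Em :: "'a mat" where "Em = mat m m (\<lambda>(i,l). (if l = i then 1 else 0) + (if l = Suc i then -a else 0))"
  have detE: "det Em = 1"
  proof -
    have ut: "upper_triangular Em" unfolding Em_def by (rule upper_triangularI) auto
    have "diag_mat Em = replicate m 1"
      by (rule nth_equalityI) (auto simp: diag_mat_def Em_def)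
    moreover have "Em \<in> carrier_mat m m" by (simp add: Em_def)
    ultimately show ?thesis using det_upper_triangular[OF ut, of m] by simp
  qed
  define W' where "W' = mat m m (\<lambda>(i,c). (a#x)!c ^ (m' - i) - (if Suc i < m then a * (a#x)!c ^ (m' - Suc i) else 0))"
  have EW: "Em * V = W'"
    unfolding Em_def Vd W'_def mat_mult_mat
    by (rule eq_matI) (auto simp: sum_E)
  have col0: "W' $$ (i, 0) = (if i = m' then 1 else 0)" if "i < m" for i
  proof (cases "i = m'")
    case False
    then have "i < m'" "m' - i = Suc (m' - Suc i)" using that by (auto simp: m_def)
    then show ?thesis using that False by (simp add: W'_def m_def)
  qed (use that in \<open>simp add: W'_def m_def\<close>)
  have "det W' = (\<Sum>i<m. W' $$ (i,0) * cofactor W' i 0)"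
    by (rule laplace_expansion_column) (auto simp: W'_def m_def)
  also have "\<dots> = cofactor W' m' 0"
    unfolding m_def by (simp add: col0[unfolded m_def] del: sum.lessThan_Suc) (simp add: sum.lessThan_Suc)
  also have "\<dots> = (-1)^m' * det (mat_delete W' m' 0)" by (simp add: cofactor_def)
  also have "mat_delete W' m' 0 = mat m' m' (\<lambda>(i,j). x!j ^ (m' - 1 - i) * (x!j - a))"
  proof (rule eq_matI)
    fix i j assume "i < dim_row (mat m' m' (\<lambda>(i,j). x!j ^ (m' - 1 - i) * (x!j - a)))"
      "j < dim_col (mat m' m' (\<lambda>(i,j). x!j ^ (m' - 1 - i) * (x!j - a)))"
    then have ij: "i < m'" "j < m'" by auto
    obtain q where q: "m' - i = Suc q" "m' - Suc i = q" "m' - 1 - i = q" using ij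
      by (metis Suc_diff_Suc diff_Suc_1 diff_diff_left plus_1_eq_Suc)
    show "mat_delete W' m' 0 $$ (i, j) = mat m' m' (\<lambda>(i,j). x!j ^ (m' - 1 - i) * (x!j - a)) $$ (i, j)"
      using ij unfolding mat_delete_def W'_def by (simp add: m_def q algebra_simps)
  qed (auto simp: mat_delete_def W'_def m_def)
  also have "det (mat m' m' (\<lambda>(i,j). x!j ^ (m' - 1 - i) * (x!j - a))) = (\<Prod>j<m'. x!j - a) * det (Vm x)"
    using det_colscale[of m' "\<lambda>(i,j). x!j ^ (m' - 1 - i)" "\<lambda>j. x!j - a"] by (simp add: Vm_def m'_def)
  finally have "det W' = (-1)^m' * ((\<Prod>j<m'. x!j - a) * vdm x)" using Cons by simp
  also have "\<dots> = vdm (a#x)" by (simp add: vdm_Cons prod_neg m'_def)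
  finally have "det W' = vdm (a#x)" .
  moreover have "det (Em * V) = det Em * det V"
    by (rule det_mult[of _ m]) (auto simp: Em_def Vd)
  ultimately show ?case using EW detE by (simp add: V_def)
qed



lemma Py0: "Py x $$$ 0 = (1::'a::field)"
  by (induct x) simp_all

lemma HH_nil_0: "x \<noteq> [] \<Longrightarrow> HH x [] 0 = (1::'a::field)"
  by (simp add: HH_def h0_def hinf_def Py0)

lemma HH_nil_neg: "- int (length x) < p \<Longrightarrow> p < 0 \<Longrightarrow> HH x [] p = (0::'a::field)"
  by (simp add: HH_def h0_def hinf_def)

lemma Pf_nil: "Pf [] u = 1" by (simp add: Pf_def)

definition Bm :: "'a::field list \<Rightarrow> 'a mat" where
  "Bm x = mat (length x) (length x) (\<lambda>(a,j). cw x a * x!a ^ j)"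

lemma powi_combine:
  assumes "(u::'a::field) \<noteq> 0"
  shows "u powi k * u ^ p * u ^ q = u powi (k + int p + int q)"
  using assms by (simp add: power_int_add)

lemma VB:
  fixes x :: "'a::field list"
  assumes d: "distinct x" and nz: "0 \<notin> set x"
  shows "det (Vm x) * det (Bm x) = 1"
proof -
  define m where "m = length x"
  have prod: "Vm x * Bm x = mat m m (\<lambda>(i,j). HH x [] (int j - int i))"
  proof -
    have "Vm x * Bm x = mat m m (\<lambda>(i,j). \<Sum>a<m. x!a ^ (m - 1 - i) * (cw x a * x!a ^ j))"
      unfolding Vm_def Bm_def m_def[symmetric] mat_mult_mat by simp
    also have "\<dots> = mat m m (\<lambda>(i,j). HH x [] (int j - int i))"
    proof (rule eq_matI)
      fix i j assume ij: "i < dim_row (mat m m (\<lambda>(i,j). HH x [] (int j - int i)))" "j < dim_col (mat m m (\<lambda>(i,j). HH x [] (int j - int i)))"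
      then have i: "i < m" and j: "j < m" by auto
      have "HH x [] (int j - int i) = (\<Sum>a<m. x!a powi (0 + int (m - 1 - i) + int j) * cw x a)"
      proof -
        have ex: "int j - int i + int m - 1 = 0 + int (m - 1 - i) + int j" using i by (simp add: of_nat_diff)
        show ?thesis unfolding closed[OF d nz] Pf_nil m_def[symmetric] ex by simp
      qed
      also have "\<dots> = (\<Sum>a<m. x!a ^ (m - 1 - i) * (cw x a * x!a ^ j))"
      proof (rule sum.cong[OF refl])
        fix a assume "a \<in> {..<m}"
        then have "x!a \<noteq> 0" using nz by (auto simp: m_def dest: nth_mem)
        then show "x!a powi (0 + int (m - 1 - i) + int j) * cw x a = x!a ^ (m - 1 - i) * (cw x a * x!a ^ j)"
          using powi_combine[of "x!a" 0 "m - 1 - i" j] by (simp add: ac_simps)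
      qed
      finally show "mat m m (\<lambda>(i,j). \<Sum>a<m. x!a ^ (m - 1 - i) * (cw x a * x!a ^ j)) $$ (i,j)
          = mat m m (\<lambda>(i,j). HH x [] (int j - int i)) $$ (i,j)" using i j by simp
    qed auto
    finally show ?thesis .
  qed
  have ut: "upper_triangular (mat m m (\<lambda>(i,j). HH x [] (int j - int i)))"
    by (rule upper_triangularI) (auto intro!: HH_nil_neg simp: m_def)
  have diag: "diag_mat (mat m m (\<lambda>(i,j). HH x [] (int j - int i))) = replicate m (1::'a)"
    by (rule nth_equalityI) (auto simp: diag_mat_def m_def intro!: HH_nil_0)
  have "det (Vm x) * det (Bm x) = det (Vm x * Bm x)"
    by (rule det_mult[symmetric, of _ m]) (auto simp: Vm_def Bm_def m_def)
  also have "\<dots> = 1" unfolding prod using det_upper_triangular[OF ut mat_carrier] diag by simp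
  finally show ?thesis .
qed

lemma vdm_nonzero: "distinct x \<Longrightarrow> vdm (x::'a::field list) \<noteq> 0"
  unfolding vdm_def by (auto simp: nth_eq_iff_index_eq)

lemma vdm_zero: "\<not> distinct x \<Longrightarrow> vdm (x::'a::field list) = 0"
proof -
  assume "\<not> distinct x"
  then obtain i j where ij: "i < j" "j < length x" "x!i = x!j"
    by (metis distinct_conv_nth linorder_neqE_nat)
  have z: "(\<Prod>j\<in>{i<..<length x}. x!i - x!j) = 0" by (rule prod_zero) (use ij in auto)
  show ?thesis unfolding vdm_def by (rule prod_zero[OF finite_lessThan bexI[of _ i]]) (use ij z in auto)
qed

lemma detB: "distinct x \<Longrightarrow> 0 \<notin> set x \<Longrightarrow> det (Bm x) = 1 / vdm (x::'a::field list)"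
  using VB[of x] det_Vm[of x] vdm_nonzero[of x] by (simp add: field_simps)



fun cf :: "'a::field list \<Rightarrow> nat \<Rightarrow> 'a" where
  "cf [] j = (if j = 0 then 1 else 0)"
| "cf (a#z) j = (if j = 0 then 0 else cf z (j-1)) - a * cf z j"

lemma cf_big: "length z < j \<Longrightarrow> cf z j = 0"
  by (induct z arbitrary: j) auto

lemma cf_top: "cf z (length z) = 1"
  by (induct z) (auto simp: cf_big)

lemma cf_sum:
  assumes "0 \<notin> set (z @ x)"
  shows "(\<Sum>j\<le>length z. cf z j * HH (z @ x) y (p + int j)) = HH x y (p + int (length z))"
  using assms
proof (induct z arbitrary: p)
  case Nil then show ?case by simp
next
  case (Cons a z)
  let ?n = "length z"
  let ?H = "HH (a # (z @ x)) y"
  have a0: "a \<noteq> 0" using Cons.prems by auto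
  have "(\<Sum>j\<le>Suc ?n. cf (a#z) j * ?H (p + int j))
      = (\<Sum>j\<le>Suc ?n. (if j = 0 then 0 else cf z (j-1)) * ?H (p + int j)) - a * (\<Sum>j\<le>Suc ?n. cf z j * ?H (p + int j))"
    by (simp add: sum_subtractf sum_distrib_left algebra_simps)
  also have "(\<Sum>j\<le>Suc ?n. (if j = 0 then 0 else cf z (j-1)) * ?H (p + int j)) = (\<Sum>j\<le>?n. cf z j * ?H (p + 1 + int j))"
    by (subst sum.atMost_Suc_shift) (simp add: algebra_simps)
  also have "(\<Sum>j\<le>Suc ?n. cf z j * ?H (p + int j)) = (\<Sum>j\<le>?n. cf z j * ?H (p + 1 + int j - 1))"
    by (simp add: cf_big)
  also have "(\<Sum>j\<le>?n. cf z j * ?H (p + 1 + int j)) - a * (\<Sum>j\<le>?n. cf z j * ?H (p + 1 + int j - 1))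
      = (\<Sum>j\<le>?n. cf z j * (?H (p + 1 + int j) - a * ?H (p + 1 + int j - 1)))"
    by (simp add: sum_subtractf sum_distrib_left algebra_simps)
  also have "\<dots> = (\<Sum>j\<le>?n. cf z j * HH (z @ x) y ((p + 1) + int j))"
  proof (rule sum.cong[OF refl])
    fix j
    show "cf z j * (?H (p + 1 + int j) - a * ?H (p + 1 + int j - 1)) = cf z j * HH (z @ x) y ((p + 1) + int j)"
      using HH_rec[OF a0, of "z@x" y "p + 1 + int j"] by simp
  qed
  also have "\<dots> = HH x y (p + 1 + int ?n)" using Cons by simp
  finally show ?case by (simp add: algebra_simps)
qed

lemma part6:
  fixes x y :: "'a::field list"
  assumes nz: "0 \<notin> set x" and len: "length lam = length x + 1"
  shows "det (mat (length x + 1) (length x + 1) (\<lambda>(i, j). HH x y (lam ! i - int i + int j))) = 0"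
proof -
  define m where "m = length x"
  define M where "M = mat (m + 1) (m + 1) (\<lambda>(i, j). HH x y (lam ! i - int i + int j))"
  define v where "v = vec (m + 1) (cf x)"
  have v0: "v \<noteq> 0\<^sub>v (m + 1)"
  proof
    assume "v = 0\<^sub>v (m + 1)"
    then have "v $ m = 0" by simp
    then show False by (simp add: v_def cf_top m_def)
  qed
  have Mv: "M *\<^sub>v v = 0\<^sub>v (m + 1)"
  proof (rule eq_vecI)
    fix i assume "i < dim_vec (0\<^sub>v (m + 1) :: 'a vec)"
    then have i: "i < m + 1" by simp
    have "(M *\<^sub>v v) $ i = (\<Sum>j<m + 1. HH x y (lam ! i - int i + int j) * cf x j)"
      using i by (simp add: M_def v_def scalar_prod_def atLeast0LessThan)
    also have "\<dots> = (\<Sum>j\<le>length x. cf x j * HH (x @ []) y ((lam ! i - int i) + int j))"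
      by (simp add: m_def lessThan_Suc_atMost mult.commute)
    also have "\<dots> = HH [] y (lam ! i - int i + int (length x))"
      by (rule cf_sum) (use nz in simp)
    also have "\<dots> = 0" by (rule HH_nil)
    finally show "(M *\<^sub>v v) $ i = 0\<^sub>v (m + 1) $ i" using i by simp
  qed (simp add: M_def)
  have carr: "M \<in> carrier_mat (m+1) (m+1)" by (simp add: M_def)
  have ex: "\<exists>v. v \<in> carrier_vec (m+1) \<and> v \<noteq> 0\<^sub>v (m+1) \<and> M *\<^sub>v v = 0\<^sub>v (m+1)"
    using v0 Mv by (intro exI[of _ v]) (simp add: v_def)
  have "det M = 0" using det_0_iff_vec_prod_zero_field[OF carr] ex by blast
  then show ?thesis by (simp add: M_def m_def)
qed



definition Gm :: "'a::field list \<Rightarrow> 'a list \<Rightarrow> int \<Rightarrow> 'a mat" where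
  "Gm x y k = mat (length x) (length x) (\<lambda>(i,a). if i = 0 then Pf y (x!a) * x!a powi k * x!a ^ (length x - 1) else x!a ^ (length x - 1 - i))"

lemma detG_dist:
  fixes x y :: "'a::field list"
  assumes d: "distinct x" and nz: "0 \<notin> set x" and ne: "x \<noteq> []"
  shows "det (Gm x y k) = HH x y k * vdm x"
proof -
  define m where "m = length x"
  have m1: "m \<ge> 1" using ne by (cases x) (auto simp: m_def)
  have xa0: "x!a \<noteq> 0" if "a < m" for a using nz that by (auto simp: m_def dest: nth_mem)
  let ?T = "mat m m (\<lambda>(i,j). if i = 0 then HH x y (k + int j) else HH x [] (int j - int i))"
  have prod: "Gm x y k * Bm x = ?T"
  proof -
    have "Gm x y k * Bm x = mat m m (\<lambda>(i,j). \<Sum>a<m. (if i = 0 then Pf y (x!a) * x!a powi k * x!a ^ (m - 1) else x!a ^ (m - 1 - i)) * (cw x a * x!a ^ j))"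
      unfolding Gm_def Bm_def m_def[symmetric] mat_mult_mat by simp
    also have "\<dots> = ?T"
    proof (rule eq_matI)
      fix i j assume "i < dim_row ?T" "j < dim_col ?T"
      then have i: "i < m" and j: "j < m" by auto
      have "(\<Sum>a<m. (if i = 0 then Pf y (x!a) * x!a powi k * x!a ^ (m - 1) else x!a ^ (m - 1 - i)) * (cw x a * x!a ^ j))
          = (if i = 0 then HH x y (k + int j) else HH x [] (int j - int i))"
      proof (cases "i = 0")
        case True
        have ex: "k + int j + int m - 1 = k + int (m - 1) + int j" using m1 by (simp add: of_nat_diff)
        have "HH x y (k + int j) = (\<Sum>a<m. Pf y (x!a) * x!a powi (k + int (m - 1) + int j) * cw x a)"
          unfolding closed[OF d nz] m_def[symmetric] ex ..
        also have "\<dots> = (\<Sum>a<m. Pf y (x!a) * x!a powi k * x!a ^ (m - 1) * (cw x a * x!a ^ j))"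
        proof (rule sum.cong[OF refl])
          fix a assume "a \<in> {..<m}"
          then show "Pf y (x!a) * x!a powi (k + int (m - 1) + int j) * cw x a = Pf y (x!a) * x!a powi k * x!a ^ (m - 1) * (cw x a * x!a ^ j)"
            using powi_combine[of "x!a" k "m - 1" j] xa0 by (simp add: ac_simps)
        qed
        finally show ?thesis using True by simp
      next
        case False
        have ex: "int j - int i + int m - 1 = 0 + int (m - 1 - i) + int j" using i by (simp add: of_nat_diff)
        have "HH x [] (int j - int i) = (\<Sum>a<m. x!a powi (0 + int (m - 1 - i) + int j) * cw x a)"
          unfolding closed[OF d nz] Pf_nil m_def[symmetric] ex by simp
        also have "\<dots> = (\<Sum>a<m. x!a ^ (m - 1 - i) * (cw x a * x!a ^ j))"
        proof (rule sum.cong[OF refl])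
          fix a assume "a \<in> {..<m}"
          then show "x!a powi (0 + int (m - 1 - i) + int j) * cw x a = x!a ^ (m - 1 - i) * (cw x a * x!a ^ j)"
            using powi_combine[of "x!a" 0 "m - 1 - i" j] xa0 by (simp add: ac_simps)
        qed
        finally show ?thesis using False by simp
      qed
      then show "mat m m (\<lambda>(i,j). \<Sum>a<m. (if i = 0 then Pf y (x!a) * x!a powi k * x!a ^ (m - 1) else x!a ^ (m - 1 - i)) * (cw x a * x!a ^ j)) $$ (i,j) = ?T $$ (i,j)"
        using i j by simp
    qed auto
    finally show ?thesis .
  qed
  have ut: "upper_triangular ?T"
    by (rule upper_triangularI) (auto intro!: HH_nil_neg simp: m_def)
  have diag: "diag_mat ?T = HH x y k # replicate (m - 1) (1::'a)"
    by (rule nth_equalityI) (use m1 in \<open>auto simp: diag_mat_def nth_Cons' m_def intro!: HH_nil_0\<close>)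
  have "det (Gm x y k) * det (Bm x) = det (Gm x y k * Bm x)"
    by (rule det_mult[symmetric, of _ m]) (auto simp: Gm_def Bm_def m_def)
  also have "\<dots> = HH x y k" unfolding prod using det_upper_triangular[OF ut mat_carrier] diag by simp
  finally show ?thesis using detB[OF d nz] vdm_nonzero[OF d] by (simp add: field_simps)
qed

lemma detG_nondist:
  fixes x y :: "'a::field list"
  assumes d: "\<not> distinct x"
  shows "det (Gm x y k) = 0"
proof -
  obtain i j where ij: "i < j" "j < length x" "x!i = x!j"
    using d by (metis distinct_conv_nth linorder_neqE_nat)
  show ?thesis
  proof (rule det_identical_columns[of _ "length x" i j])
    show "col (Gm x y k) i = col (Gm x y k) j"
      by (rule eq_vecI) (use ij in \<open>auto simp: Gm_def\<close>)
  qed (use ij in \<open>auto simp: Gm_def\<close>)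
qed

lemma detG_leib:
  fixes x y :: "'a::field list"
  assumes ne: "x \<noteq> []"
  shows "det (Gm x y k) = (\<Sum>\<sigma> | \<sigma> permutes {..<length x}. of_int (sign \<sigma>) *
     (Pf y (x!(\<sigma> 0)) * x!(\<sigma> 0) powi k * (\<Prod>i<length x. x!(\<sigma> i) ^ (length x - 1 - i))))"
  unfolding Gm_def det_leib
proof (rule sum.cong[OF refl])
  fix \<sigma>
  obtain m' where m: "length x = Suc m'" using ne by (cases x) auto
  show "of_int (sign \<sigma>) * (\<Prod>i<length x. case (i, \<sigma> i) of (i, a) \<Rightarrow> if i = 0 then Pf y (x!a) * x!a powi k * x!a ^ (length x - 1) else x!a ^ (length x - 1 - i))
     = of_int (sign \<sigma>) * (Pf y (x!(\<sigma> 0)) * x!(\<sigma> 0) powi k * (\<Prod>i<length x. x!(\<sigma> i) ^ (length x - 1 - i)))"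
    unfolding m by (simp add: prod.lessThan_Suc_shift del: prod.lessThan_Suc)
qed

lemma Vm_leib: "det (Vm y) = (\<Sum>\<tau> | \<tau> permutes {..<length y}. of_int (sign \<tau>) * (\<Prod>j<length y. y!(\<tau> j) ^ (length y - 1 - j)))"
  unfolding Vm_def det_leib by simp

lemma part2:
  fixes x y :: "'a::field list"
  assumes nz: "0 \<notin> set x" and ne: "length x \<ge> 1"
  shows "HH x y k * vdm x * vdm y =
        (\<Sum>\<sigma> | \<sigma> permutes {..<length x}. \<Sum>\<tau> | \<tau> permutes {..<length y}.
           of_int (sign \<sigma>) * of_int (sign \<tau>) *
           ((\<Prod>j<length y. 1 - y ! (\<tau> j) / x ! (\<sigma> 0)) * (x ! (\<sigma> 0)) powi k *
            (\<Prod>i<length x. (x ! (\<sigma> i)) ^ (length x - 1 - i)) *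
            (\<Prod>j<length y. (y ! (\<tau> j)) ^ (length y - 1 - j))))"
proof -
  have ne': "x \<noteq> []" using ne by auto
  have L: "HH x y k * vdm x * vdm y = det (Gm x y k) * det (Vm y)"
  proof (cases "distinct x")
    case True then show ?thesis using detG_dist[OF True nz ne'] det_Vm[of y] by simp
  next
    case False then show ?thesis using detG_nondist[OF False] vdm_zero[OF False] by simp
  qed
  have pf: "(\<Prod>j<length y. 1 - y ! (\<tau> j) / u) = Pf y u" if "\<tau> permutes {..<length y}" for \<tau> u
  proof -
    have b: "bij_betw \<tau> {..<length y} {..<length y}" using that by (rule permutes_imp_bij)
    show ?thesis unfolding Pf_def using prod.reindex_bij_betw[OF b, of "\<lambda>j. 1 - y!j / u"] by simp
  qed
  show ?thesis unfolding L detG_leib[OF ne'] Vm_leib sum_product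
    by (rule sum.cong[OF refl], rule sum.cong[OF refl]) (simp add: pf ac_simps)
qed

lemma part5:
  fixes x y :: "'a::field list"
  assumes nz: "0 \<notin> set x" and d: "distinct x" and len: "length lam = length x"
  shows "det (mat (length x) (length x) (\<lambda>(i, j). HH x y (lam ! i - int i + int j))) =
        (\<Prod>i<length x. \<Prod>j<length y. 1 - y ! j / x ! i) * Elam lam x"
proof -
  define m where "m = length x"
  have xa0: "x!a \<noteq> 0" if "a < m" for a using nz that by (auto simp: m_def dest: nth_mem)
  define A where "A = mat m m (\<lambda>(i,a). x!a powi (lam!i + int m - 1 - int i))"
  define B' where "B' = mat m m (\<lambda>(a,j). Pf y (x!a) * (cw x a * x!a ^ j))"
  have AB: "A * B' = mat m m (\<lambda>(i, j). HH x y (lam ! i - int i + int j))"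
    unfolding A_def B'_def mat_mult_mat
  proof (rule eq_matI)
    fix i j assume "i < dim_row (mat m m (\<lambda>(i, j). HH x y (lam ! i - int i + int j)))"
      "j < dim_col (mat m m (\<lambda>(i, j). HH x y (lam ! i - int i + int j)))"
    then have i: "i < m" and j: "j < m" by auto
    have "HH x y (lam ! i - int i + int j) = (\<Sum>a<m. Pf y (x!a) * x!a powi ((lam!i + int m - 1 - int i) + int 0 + int j) * cw x a)"
      unfolding closed[OF d nz] m_def[symmetric] by (simp add: algebra_simps)
    also have "\<dots> = (\<Sum>a<m. x!a powi (lam!i + int m - 1 - int i) * (Pf y (x!a) * (cw x a * x!a ^ j)))"
    proof (rule sum.cong[OF refl])
      fix a assume "a \<in> {..<m}"
      then show "Pf y (x!a) * x!a powi ((lam!i + int m - 1 - int i) + int 0 + int j) * cw x a = x!a powi (lam!i + int m - 1 - int i) * (Pf y (x!a) * (cw x a * x!a ^ j))"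
        using powi_combine[of "x!a" "lam!i + int m - 1 - int i" 0 j, symmetric] xa0 by (simp add: ac_simps)
    qed
    finally show "mat m m (\<lambda>(i,j). \<Sum>l<m. (case (i, l) of (i, a) \<Rightarrow> x!a powi (lam!i + int m - 1 - int i)) * (case (l, j) of (a, j) \<Rightarrow> Pf y (x!a) * (cw x a * x!a ^ j))) $$ (i, j)
        = mat m m (\<lambda>(i, j). HH x y (lam ! i - int i + int j)) $$ (i, j)" using i j by simp
  qed auto
  have detA: "det A = alt lam x" unfolding A_def det_leib alt_def m_def by simp
  have detB': "det B' = (\<Prod>a<m. Pf y (x!a)) * det (Bm x)"
    unfolding B'_def Bm_def m_def[symmetric] using det_rowscale[of m "\<lambda>a. Pf y (x!a)" "\<lambda>(a,j). cw x a * x!a ^ j"]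
    by simp
  have "det (mat m m (\<lambda>(i, j). HH x y (lam ! i - int i + int j))) = det A * det B'"
    unfolding AB[symmetric] by (rule det_mult[of _ m]) (auto simp: A_def B'_def)
  also have "\<dots> = (\<Prod>a<m. Pf y (x!a)) * Elam lam x"
    unfolding detA detB' detB[OF d nz] Elam_def by (simp add: field_simps)
  finally show ?thesis by (simp add: m_def Pf_def)
qed

theorem mainTheorem7:
  fixes x y :: "'a::field list"
  assumes nz: "\<forall>a\<in>set x. a \<noteq> 0"
  shows
   "(\<forall>k::int. HH x y k = (\<Sum>j\<le>length y. (-1)^j * esym j y * HH x [] (k - int j)))
  \<and> (length x \<ge> 1 \<longrightarrow> (\<forall>k::int.
        HH x y k * vdm x * vdm y =
        (\<Sum>\<sigma> | \<sigma> permutes {..<length x}. \<Sum>\<tau> | \<tau> permutes {..<length y}.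
           of_int (sign \<sigma>) * of_int (sign \<tau>) *
           ((\<Prod>j<length y. 1 - y ! (\<tau> j) / x ! (\<sigma> 0)) * (x ! (\<sigma> 0)) powi k *
            (\<Prod>i<length x. (x ! (\<sigma> i)) ^ (length x - 1 - i)) *
            (\<Prod>j<length y. (y ! (\<tau> j)) ^ (length y - 1 - j))))))
  \<and> (length x \<ge> 1 \<longrightarrow> (\<forall>k::int. HH x y k - x ! 0 * HH x y (k - 1) = HH (tl x) y k))
  \<and> (length x = 1 \<longrightarrow> (\<forall>k::int. HH x y k - x ! 0 * HH x y (k - 1) = 0))
  \<and> (distinct x \<longrightarrow> (\<forall>lam::int list. length lam = length x \<longrightarrow>
        det (mat (length x) (length x) (\<lambda>(i, j). HH x y (lam ! i - int i + int j))) =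
        (\<Prod>i<length x. \<Prod>j<length y. 1 - y ! j / x ! i) * Elam lam x))
  \<and> (\<forall>lam::int list. length lam = length x + 1 \<longrightarrow>
        det (mat (length x + 1) (length x + 1) (\<lambda>(i, j). HH x y (lam ! i - int i + int j))) = 0)"
  proof -
  have nz': "0 \<notin> set x" using nz by auto
  have p3: "HH x y k - x ! 0 * HH x y (k - 1) = HH (tl x) y k" if l1: "length x \<ge> 1" for k
  proof -
    obtain a x' where x: "x = a # x'" using l1 by (cases x) auto
    have "a \<noteq> 0" using nz x by auto
    then show ?thesis using HH_rec[of a x' y k] x by simp
  qed
  show ?thesis
  proof (intro conjI allI impI)
    fix k show "HH x y k = (\<Sum>j\<le>length y. (-1)^j * esym j y * HH x [] (k - int j))" by (rule HH_exp)
  next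
    fix k assume "length x \<ge> 1"
    then show "HH x y k * vdm x * vdm y =
        (\<Sum>\<sigma> | \<sigma> permutes {..<length x}. \<Sum>\<tau> | \<tau> permutes {..<length y}.
           of_int (sign \<sigma>) * of_int (sign \<tau>) *
           ((\<Prod>j<length y. 1 - y ! (\<tau> j) / x ! (\<sigma> 0)) * (x ! (\<sigma> 0)) powi k *
            (\<Prod>i<length x. (x ! (\<sigma> i)) ^ (length x - 1 - i)) *
            (\<Prod>j<length y. (y ! (\<tau> j)) ^ (length y - 1 - j))))"
      by (rule part2[OF nz'])
  next
    fix k assume "length x \<ge> 1"
    then show "HH x y k - x ! 0 * HH x y (k - 1) = HH (tl x) y k" by (rule p3)
  next
    fix k assume l: "length x = 1"
    then have "tl x = []" by (cases x) auto
    then show "HH x y k - x ! 0 * HH x y (k - 1) = 0" using p3[of k] l HH_nil[of y k] by simp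
  next
    fix lam :: "int list" assume "distinct x" "length lam = length x"
    then show "det (mat (length x) (length x) (\<lambda>(i, j). HH x y (lam ! i - int i + int j))) =
        (\<Prod>i<length x. \<Prod>j<length y. 1 - y ! j / x ! i) * Elam lam x"
      by (intro part5 nz')
  next
    fix lam :: "int list" assume "length lam = length x + 1"
    then show "det (mat (length x + 1) (length x + 1) (\<lambda>(i, j). HH x y (lam ! i - int i + int j))) = 0"
      by (intro part6 nz')
  qed
qed

end
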